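(* Assume the standing setting below. Let $(H_1,Y_1),(H_2,Y_2)\in\mathscr Q$ and $w\in\mathbf F(U)$. If $w$ is a $\tau$-shortening word over both $(H_1,Y_1)$ and $(H_2,Y_2)$, then $(H_1,Y_1)=(H_2,Y_2)$.
   Context: Standing setting: $G$ acts by isometries on a $\delta$-hyperbolic geodesic space $X$ ($(x,z)_t\ge\min\{(x,y)_t,(y,z)_t\}-\delta$, $(x,y)_z=\frac12(|x-z|+|y-z|-|x-y|)$), $\alpha=200\delta$, $L_0,\Delta_0>0$. $U\subset G$ is $\alpha$-reduced at $p\in X$: $U\cap U^{-1}=\varnothing$ and for distinct $u_1,u_2\in U\sqcup U^{-1}$, $(u_1p,u_2p)_p<\frac12\min\{|u_1p-p|,|u_2p-p|\}-\alpha-50\delta$; and $0<L(U,p)=\max_{u\in U}|up-p|\le L_0$. For a loxodromic subgroup $H$ with two-point limit set $\{\xi,\eta\}$, $C_H$ is the open $20\delta$-neighbourhood of the union of all $10^3\delta$-local $(1,\delta)$-quasi-geodesics from $\xi$ to $\eta$. $\mathscr Q$ is a loxodromic moving family: a set of pairs $(H,C_H)$, $H$ loxodromic, invariant under $g\cdot(H,Y)=(gHg^{-1},gY)$, with $\Delta(\mathscr Q,X)=\sup\{\operatorname{diam}(Y_1^{+20\delta}\cap Y_2^{+20\delta}):(H_1,Y_1)\ne(H_2,Y_2)\}\le\Delta_0$. Let $\tau\ge\Delta_0+2L_0+223\delta$. For a reduced word $w\equiv u_1\cdots u_n$ over $U\sqcup U^{-1}$ put $x_0=p$, $x_i=u_1\cdots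 u_ip$, and for $(H,Y)\in\mathscr Q$ let $y_i\in Y$ be a projection of $x_i$ on $Y$ (a point with $|x_i-y_i|\le d(x_i,Y)+\delta$). $w$ is a $\tau$-shortening word over $(H,Y)$ if $|y_0-y_n|>\tau$, $|x_0-y_0|\le\frac12|u_1p-p|-\alpha$ and $|x_n-y_n|\le\frac12|u_np-p|-\alpha$. $\mathbf F(U)$ is the free group on $U$. *)

theory Defs
  imports "HOL-Analysis.Analysis" "HOL-Algebra.Group"
begin

definition gromov :: "'a::metric_space \<Rightarrow> 'a \<Rightarrow> 'a \<Rightarrow> real" where
  "gromov x y z = (dist x z + dist y z - dist x y) / 2"

definition gromov_hyperbolic :: "'a::metric_space set \<Rightarrow> real \<Rightarrow> bool" where
  "gromov_hyperbolic X \<delta> \<longleftrightarrow>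
     (\<forall>x\<in>X. \<forall>y\<in>X. \<forall>z\<in>X. \<forall>t\<in>X.
        gromov x z t \<ge> min (gromov x y t) (gromov y z t) - \<delta>)"

definition geodesic_space :: "'a::metric_space set \<Rightarrow> bool" where
  "geodesic_space X \<longleftrightarrow>
     (\<forall>x\<in>X. \<forall>y\<in>X. \<exists>\<gamma>::real \<Rightarrow> 'a.
        \<gamma> 0 = x \<and> \<gamma> (dist x y) = y \<and> \<gamma> ` {0..dist x y} \<subseteq> X \<and>
        (\<forall>s\<in>{0..dist x y}. \<forall>t\<in>{0..dist x y}. dist (\<gamma> s) (\<gamma> t) = \<bar>s - t\<bar>))"

text \<open>Closed r-neighbourhood Y^{+r} = {x. d(x,Y) \<le> r} (empty if Y is empty).\<close>
definition nbhd :: "real \<Rightarrow> 'a::metric_space set \<Rightarrow> 'a set" where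
  "nbhd r Y = {x. \<forall>\<epsilon>>0. \<exists>y\<in>Y. dist x y < r + \<epsilon>}"

definition conv_infty :: "(nat \<Rightarrow> 'a::metric_space) \<Rightarrow> bool" where
  "conv_infty x \<longleftrightarrow> (\<forall>b M. \<exists>N. \<forall>n\<ge>N. \<forall>m\<ge>N. M \<le> gromov (x n) (x m) b)"

definition seq_rel :: "(nat \<Rightarrow> 'a::metric_space) \<Rightarrow> (nat \<Rightarrow> 'a) \<Rightarrow> bool" where
  "seq_rel x y \<longleftrightarrow> (\<forall>b M. \<exists>N. \<forall>n\<ge>N. \<forall>m\<ge>N. M \<le> gromov (x n) (y m) b)"

definition gromov_boundary :: "(nat \<Rightarrow> 'a::metric_space) set set" where
  "gromov_boundary = {{y. conv_infty y \<and> seq_rel x y} | x. conv_infty x}"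

definition tends_bdry_top :: "(real \<Rightarrow> 'a::metric_space) \<Rightarrow> (nat \<Rightarrow> 'a) set \<Rightarrow> bool" where
  "tends_bdry_top \<gamma> \<eta> \<longleftrightarrow>
     (\<forall>t::nat \<Rightarrow> real. filterlim t at_top sequentially \<longrightarrow> (\<lambda>n. \<gamma> (t n)) \<in> \<eta>)"

definition tends_bdry_bot :: "(real \<Rightarrow> 'a::metric_space) \<Rightarrow> (nat \<Rightarrow> 'a) set \<Rightarrow> bool" where
  "tends_bdry_bot \<gamma> \<xi> \<longleftrightarrow>
     (\<forall>t::nat \<Rightarrow> real. filterlim t at_bot sequentially \<longrightarrow> (\<lambda>n. \<gamma> (t n)) \<in> \<xi>)"

definition partition_sums :: "(real \<Rightarrow> 'a::metric_space) \<Rightarrow> real \<Rightarrow> real \<Rightarrow> real set" where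
  "partition_sums \<gamma> a b =
     {(\<Sum>i<n. dist (\<gamma> (t i)) (\<gamma> (t (Suc i)))) | n t.
        t 0 = a \<and> t n = b \<and> (\<forall>i<n. t i \<le> t (Suc i))}"

text \<open>Rectifiable, parametrized by arc length: length of the restriction to [s,s'] is s'-s.\<close>
definition arclength_param :: "(real \<Rightarrow> 'a::metric_space) \<Rightarrow> bool" where
  "arclength_param \<gamma> \<longleftrightarrow>
     (\<forall>s s'. s \<le> s' \<longrightarrow>
        (\<forall>v\<in>partition_sums \<gamma> s s'. v \<le> s' - s) \<and> Sup (partition_sums \<gamma> s s') = s' - s)"

definition local_qgeod :: "real \<Rightarrow> real \<Rightarrow> real \<Rightarrow> (real \<Rightarrow> 'a::metric_space) \<Rightarrow> bool" where
  "local_qgeod L k l \<gamma> \<longleftrightarrow> arclength_param \<gamma> \<and>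
     (\<forall>s s'. s \<le> s' \<longrightarrow> s' - s \<le> L \<longrightarrow> s' - s \<le> k * dist (\<gamma> s) (\<gamma> s') + l)"

definition isometric_action :: "('g, 'b) monoid_scheme \<Rightarrow> ('g \<Rightarrow> 'a::metric_space \<Rightarrow> 'a) \<Rightarrow> bool" where
  "isometric_action G act \<longleftrightarrow> group G \<and>
     (\<forall>g\<in>carrier G. \<forall>x y. dist (act g x) (act g y) = dist x y) \<and>
     (\<forall>x. act \<one>\<^bsub>G\<^esub> x = x) \<and>
     (\<forall>g\<in>carrier G. \<forall>h\<in>carrier G. \<forall>x. act (g \<otimes>\<^bsub>G\<^esub> h) x = act g (act h x))"

definition limit_set :: "('g \<Rightarrow> 'a::metric_space \<Rightarrow> 'a) \<Rightarrow> 'g set \<Rightarrow> (nat \<Rightarrow> 'a) set set" where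
  "limit_set act H = {\<xi> \<in> gromov_boundary. \<exists>x (h::nat \<Rightarrow> 'g). (\<forall>n. h n \<in> H) \<and> (\<lambda>n. act (h n) x) \<in> \<xi>}"

definition loxodromic_subgroup :: "('g, 'b) monoid_scheme \<Rightarrow> ('g \<Rightarrow> 'a::metric_space \<Rightarrow> 'a) \<Rightarrow> 'g set \<Rightarrow> bool" where
  "loxodromic_subgroup G act H \<longleftrightarrow> subgroup H G \<and> card (limit_set act H) = 2"

definition C_H :: "('g \<Rightarrow> 'a::metric_space \<Rightarrow> 'a) \<Rightarrow> real \<Rightarrow> 'g set \<Rightarrow> 'a set" where
  "C_H act \<delta> H = {x. \<exists>\<xi> \<eta> (\<gamma>::real \<Rightarrow> 'a). limit_set act H = {\<xi>, \<eta>} \<and> \<xi> \<noteq> \<eta> \<and>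
      local_qgeod (1000 * \<delta>) 1 \<delta> \<gamma> \<and> tends_bdry_bot \<gamma> \<xi> \<and> tends_bdry_top \<gamma> \<eta> \<and>
      (\<exists>t. dist x (\<gamma> t) < 20 * \<delta>)}"

definition conjugate :: "('g, 'b) monoid_scheme \<Rightarrow> 'g \<Rightarrow> 'g set \<Rightarrow> 'g set" where
  "conjugate G g H = (\<lambda>h. g \<otimes>\<^bsub>G\<^esub> h \<otimes>\<^bsub>G\<^esub> inv\<^bsub>G\<^esub> g) ` H"

definition loxodromic_moving_family ::
  "('g, 'b) monoid_scheme \<Rightarrow> ('g \<Rightarrow> 'a::metric_space \<Rightarrow> 'a) \<Rightarrow> real \<Rightarrow> real \<Rightarrow> ('g set \<times> 'a set) set \<Rightarrow> bool" where
  "loxodromic_moving_family G act \<delta> \<Delta>0 Q \<longleftrightarrow>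
     (\<forall>(H, Y)\<in>Q. loxodromic_subgroup G act H \<and> Y = C_H act \<delta> H) \<and>
     (\<forall>(H, Y)\<in>Q. \<forall>g\<in>carrier G. (conjugate G g H, act g ` Y) \<in> Q) \<and>
     (\<forall>(H1, Y1)\<in>Q. \<forall>(H2, Y2)\<in>Q. (H1, Y1) \<noteq> (H2, Y2) \<longrightarrow>
        (\<forall>x\<in>nbhd (20 * \<delta>) Y1 \<inter> nbhd (20 * \<delta>) Y2.
           \<forall>y\<in>nbhd (20 * \<delta>) Y1 \<inter> nbhd (20 * \<delta>) Y2. dist x y \<le> \<Delta>0))"

definition alpha_reduced ::
  "('g, 'b) monoid_scheme \<Rightarrow> ('g \<Rightarrow> 'a::metric_space \<Rightarrow> 'a) \<Rightarrow> real \<Rightarrow> real \<Rightarrow> 'g set \<Rightarrow> 'a \<Rightarrow> bool" where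
  "alpha_reduced G act \<delta> \<alpha> U p \<longleftrightarrow> U \<subseteq> carrier G \<and> U \<inter> (m_inv G) ` U = {} \<and>
     (\<forall>u1\<in>U \<union> (m_inv G) ` U. \<forall>u2\<in>U \<union> (m_inv G) ` U. u1 \<noteq> u2 \<longrightarrow>
        gromov (act u1 p) (act u2 p) p
          < min (dist (act u1 p) p) (dist (act u2 p) p) / 2 - \<alpha> - 50 * \<delta>)"

text \<open>Reduced words over U \<squnion> U^{-1}, i.e. elements of the free group F(U).\<close>
definition reduced_word :: "('g, 'b) monoid_scheme \<Rightarrow> 'g set \<Rightarrow> 'g list \<Rightarrow> bool" where
  "reduced_word G U ws \<longleftrightarrow> set ws \<subseteq> U \<union> (m_inv G) ` U \<and>
     (\<forall>i. Suc i < length ws \<longrightarrow> ws ! Suc i \<noteq> inv\<^bsub>G\<^esub> (ws ! i))"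

definition word_elem :: "('g, 'b) monoid_scheme \<Rightarrow> 'g list \<Rightarrow> 'g" where
  "word_elem G ws = foldr (\<lambda>u acc. u \<otimes>\<^bsub>G\<^esub> acc) ws \<one>\<^bsub>G\<^esub>"

definition is_projection :: "real \<Rightarrow> 'a::metric_space \<Rightarrow> 'a set \<Rightarrow> 'a \<Rightarrow> bool" where
  "is_projection \<delta> x Y y \<longleftrightarrow> y \<in> Y \<and> dist x y \<le> infdist x Y + \<delta>"

definition shortening_word ::
  "('g, 'b) monoid_scheme \<Rightarrow> ('g \<Rightarrow> 'a::metric_space \<Rightarrow> 'a) \<Rightarrow> real \<Rightarrow> real \<Rightarrow> real \<Rightarrow> 'a \<Rightarrow> 'g list \<Rightarrow> 'a set \<Rightarrow> bool" where
  "shortening_word G act \<delta> \<alpha> \<tau> p ws Y \<longleftrightarrow> ws \<noteq> [] \<and>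
     (\<exists>y0 yn. is_projection \<delta> p Y y0 \<and> is_projection \<delta> (act (word_elem G ws) p) Y yn \<and>
        dist y0 yn > \<tau> \<and>
        dist p y0 \<le> dist (act (hd ws) p) p / 2 - \<alpha> \<and>
        dist (act (word_elem G ws) p) yn \<le> dist (act (last ws) p) p / 2 - \<alpha>)"

end

theory Submission
  imports Defs
begin

lemma hypD:
  assumes "gromov_hyperbolic (UNIV::'a::metric_space set) \<delta>"
  shows "min (gromov x y t) (gromov y z t) - \<delta> \<le> gromov (x::'a) z t"
  using assms unfolding gromov_hyperbolic_def by auto

lemma min_le_disj: "min a b - d \<le> (c::real) \<Longrightarrow> a - d \<le> c \<or> b - d \<le> c"
  by (auto simp: min_def split: if_splits)

lemma gromov_comm: "gromov x y z = gromov y x z"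
  unfolding gromov_def by (simp add: dist_commute)

lemma gromov_id: "gromov x y z + gromov z y x = dist x z"
  unfolding gromov_def by (simp add: dist_commute field_simps)


lemma gromov_self: "gromov x y x = 0"
  unfolding gromov_def by (simp add: dist_commute)

lemma gromov_selfd: "gromov x x z = dist x z"
  unfolding gromov_def by (simp add: dist_commute)

lemma gromov_lower: "dist x z - dist x y \<le> gromov x y z"
  unfolding gromov_def using dist_triangle[of x z y] dist_triangle[of y z x]
  by (simp add: dist_commute)

lemma gromov_le: "gromov x y z \<le> dist x z"
  unfolding gromov_def using dist_triangle[of y z x]
  by (simp add: dist_commute)

lemma delta_nonneg:
  assumes "gromov_hyperbolic (UNIV::'a::metric_space set) \<delta>"
  shows "0 \<le> \<delta>"
  using hypD[OF assms, of x x x x] by (simp add: gromov_self)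

lemma chain_fwd:
  fixes x :: "nat \<Rightarrow> 'a::metric_space"
  assumes H: "gromov_hyperbolic (UNIV::'a set) \<delta>" and e: "0 \<le> \<epsilon>" "2*\<epsilon> + 2*\<delta> < D"
    and loc: "\<And>i. 0 < i \<Longrightarrow> i < n \<Longrightarrow> gromov (x (i-1)) (x (Suc i)) (x i) \<le> \<epsilon>"
    and st: "\<And>i. i < n \<Longrightarrow> D \<le> dist (x i) (x (Suc i))"
  shows "1 \<le> k \<Longrightarrow> k \<le> n \<Longrightarrow> gromov (x 0) (x k) (x (k-1)) \<le> \<epsilon> + \<delta>"
proof (induction k)
  case 0 then show ?case by simp
next
  case (Suc k)
  have d0: "0 \<le> \<delta>" using delta_nonneg[OF H] .
  show ?case
  proof (cases "k = 0")
    case True then show ?thesis using e d0 by (simp add: gromov_self)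
  next
    case False
    have IH: "gromov (x 0) (x k) (x (k-1)) \<le> \<epsilon> + \<delta>" using Suc False by simp
    have h: "min (gromov (x (k-1)) (x 0) (x k)) (gromov (x 0) (x (Suc k)) (x k)) - \<delta>
           \<le> gromov (x (k-1)) (x (Suc k)) (x k)" by (rule hypD[OF H])
    have l: "gromov (x (k-1)) (x (Suc k)) (x k) \<le> \<epsilon>" using loc[of k] Suc False by simp
    have s: "D \<le> dist (x (k-1)) (x k)" using st[of "k-1"] Suc False by simp
    have i: "gromov (x (k-1)) (x 0) (x k) + gromov (x 0) (x k) (x (k-1)) = dist (x (k-1)) (x k)"
      unfolding gromov_def by (simp add: dist_commute field_simps)
    have "gromov (x 0) (x (Suc k)) (x k) \<le> \<epsilon> + \<delta>"
      using min_le_disj[OF h] l s i IH e by linarith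
    then show ?thesis by simp
  qed
qed

lemma chain_mid:
  fixes x :: "nat \<Rightarrow> 'a::metric_space"
  assumes H: "gromov_hyperbolic (UNIV::'a set) \<delta>" and e: "0 \<le> \<epsilon>" "2*\<epsilon> + 3*\<delta> < D"
    and loc: "\<And>i. 0 < i \<Longrightarrow> i < n \<Longrightarrow> gromov (x (i-1)) (x (Suc i)) (x i) \<le> \<epsilon>"
    and st: "\<And>i. i < n \<Longrightarrow> D \<le> dist (x i) (x (Suc i))"
    and k: "0 < k" "k < n"
  shows "gromov (x 0) (x n) (x k) \<le> \<epsilon> + 2*\<delta>"
proof -
  have d0: "0 \<le> \<delta>" using delta_nonneg[OF H] .
  have e2: "2*\<epsilon> + 2*\<delta> < D" using e d0 by linarith
  have kk0: "1 \<le> k" "k \<le> n" using k by auto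
  have F: "gromov (x 0) (x k) (x (k-1)) \<le> \<epsilon> + \<delta>"
    by (rule chain_fwd[OF H e(1) e2 loc st kk0])
  define y where "y i = x (n - i)" for i
  have locy: "gromov (y (i-1)) (y (Suc i)) (y i) \<le> \<epsilon>" if "0 < i" "i < n" for i
  proof -
    have ii: "0 < n-i" "n-i < n" using that by auto
    have f: "gromov (x (n-i-1)) (x (Suc (n-i))) (x (n-i)) \<le> \<epsilon>" using loc[OF ii] .
    have e1: "n - (i-1) = Suc (n-i)" and e2: "n - Suc i = n-i-1" using that by auto
    show ?thesis unfolding y_def e1 e2 by (subst gromov_comm) (rule f)
  qed
  have sty: "D \<le> dist (y i) (y (Suc i))" if "i < n" for i
  proof -
    have ii: "n-i-1 < n" using that by auto
    have f: "D \<le> dist (x (n-i-1)) (x (Suc (n-i-1)))" using st[OF ii] .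
    have e1: "Suc (n-i-1) = n - i" and e2: "n - Suc i = n-i-1" using that by auto
    show ?thesis using f unfolding y_def e1 e2 by (simp only: dist_commute)
  qed
  have kk: "1 \<le> n-k" "n-k \<le> n" using k by auto
  have B0: "gromov (y 0) (y (n-k)) (y (n-k-1)) \<le> \<epsilon> + \<delta>"
    by (rule chain_fwd[OF H e(1) e2 locy sty kk])
  have q1: "n - (n-k-1) = Suc k" using k by auto
  have q2: "n - (n-k) = k" using k by auto
  have B: "gromov (x n) (x k) (x (Suc k)) \<le> \<epsilon> + \<delta>" using B0 unfolding y_def q1 q2 diff_zero .
  have h1: "min (gromov (x (k-1)) (x 0) (x k)) (gromov (x 0) (x (Suc k)) (x k)) - \<delta>
           \<le> gromov (x (k-1)) (x (Suc k)) (x k)" by (rule hypD[OF H])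
  have h2: "min (gromov (x 0) (x n) (x k)) (gromov (x n) (x (Suc k)) (x k)) - \<delta>
           \<le> gromov (x 0) (x (Suc k)) (x k)" by (rule hypD[OF H])
  have l: "gromov (x (k-1)) (x (Suc k)) (x k) \<le> \<epsilon>" using loc[of k] k by simp
  have s1: "D \<le> dist (x (k-1)) (x k)" using st[of "k-1"] k by simp
  have s2: "D \<le> dist (x k) (x (Suc k))" using st[of "k"] k by simp
  have i1: "gromov (x (k-1)) (x 0) (x k) + gromov (x 0) (x k) (x (k-1)) = dist (x (k-1)) (x k)"
    unfolding gromov_def by (simp add: dist_commute field_simps)
  have i2: "gromov (x n) (x (Suc k)) (x k) + gromov (x n) (x k) (x (Suc k)) = dist (x k) (x (Suc k))"
    unfolding gromov_def by (simp add: dist_commute field_simps)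
  have c1: "gromov (x 0) (x (Suc k)) (x k) - \<delta> \<le> \<epsilon>"
    using min_le_disj[OF h1] l s1 i1 F e d0 by linarith
  have "min (gromov (x 0) (x n) (x k)) (gromov (x n) (x (Suc k)) (x k)) - 2*\<delta> \<le> \<epsilon>"
    using h2 c1 by linarith
  then have "gromov (x 0) (x n) (x k) - 2*\<delta> \<le> \<epsilon> \<or> gromov (x n) (x (Suc k)) (x k) - 2*\<delta> \<le> \<epsilon>"
    by (rule min_le_disj)
  then show ?thesis using s2 i2 B e d0 by linarith
qed

definition lipc :: "(real \<Rightarrow> 'a::metric_space) \<Rightarrow> bool" where
  "lipc \<gamma> \<longleftrightarrow> (\<forall>s s'. dist (\<gamma> s) (\<gamma> s') \<le> \<bar>s - s'\<bar>)"

definition locq :: "real \<Rightarrow> (real \<Rightarrow> 'a::metric_space) \<Rightarrow> bool" where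
  "locq \<delta> \<gamma> \<longleftrightarrow> (\<forall>s s'. s \<le> s' \<longrightarrow> s' - s \<le> 1000*\<delta> \<longrightarrow> s' - s \<le> dist (\<gamma> s) (\<gamma> s') + \<delta>)"

lemma curve_chain:
  fixes \<gamma> :: "real \<Rightarrow> 'a::metric_space"
  assumes H: "gromov_hyperbolic (UNIV::'a set) \<delta>" and d: "0 < \<delta>"
    and L: "lipc \<gamma>" and Q: "locq \<delta> \<gamma>"
    and st: "\<And>i. i < n \<Longrightarrow> 250*\<delta> \<le> \<tau> (Suc i) - \<tau> i \<and> \<tau> (Suc i) - \<tau> i \<le> 500*\<delta>"
    and k: "0 < k" "k < n"
  shows "gromov (\<gamma> (\<tau> 0)) (\<gamma> (\<tau> n)) (\<gamma> (\<tau> k)) \<le> 5/2*\<delta>"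
proof -
  define x where "x i = \<gamma> (\<tau> i)" for i
  have loc: "gromov (x (i-1)) (x (Suc i)) (x i) \<le> \<delta>/2" if "0 < i" "i < n" for i
  proof -
    have a: "250*\<delta> \<le> \<tau> i - \<tau> (i-1) \<and> \<tau> i - \<tau> (i-1) \<le> 500*\<delta>" using st[of "i-1"] that by simp
    have b: "250*\<delta> \<le> \<tau> (Suc i) - \<tau> i \<and> \<tau> (Suc i) - \<tau> i \<le> 500*\<delta>" using st[of i] that by simp
    have l1: "dist (x (i-1)) (x i) \<le> \<bar>\<tau> (i-1) - \<tau> i\<bar>" using L unfolding lipc_def x_def by blast
    have l1b: "\<bar>\<tau> (i-1) - \<tau> i\<bar> = \<tau> i - \<tau> (i-1)" using a d by arith
    have l2: "dist (x (Suc i)) (x i) \<le> \<bar>\<tau> (Suc i) - \<tau> i\<bar>" using L unfolding lipc_def x_def by blast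
    have l2b: "\<bar>\<tau> (Suc i) - \<tau> i\<bar> = \<tau> (Suc i) - \<tau> i" using b d by arith
    have le: "\<tau> (i-1) \<le> \<tau> (Suc i)" "\<tau> (Suc i) - \<tau> (i-1) \<le> 1000*\<delta>" using a b d by linarith+
    have l3: "\<tau> (Suc i) - \<tau> (i-1) \<le> dist (x (i-1)) (x (Suc i)) + \<delta>"
      using Q le unfolding locq_def x_def by blast
    have "dist (x (Suc i)) (x i) = dist (x i) (x (Suc i))" by (rule dist_commute)
    moreover have "dist (x (i-1)) (x i) \<le> \<tau> i - \<tau> (i-1)" using l1 l1b by simp
    moreover have "dist (x (Suc i)) (x i) \<le> \<tau> (Suc i) - \<tau> i" using l2 l2b by simp
    ultimately have "dist (x (i-1)) (x i) + dist (x (Suc i)) (x i) - dist (x (i-1)) (x (Suc i)) \<le> \<delta>"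
      using l3 by linarith
    then show ?thesis unfolding gromov_def by simp
  qed
  have stx: "249*\<delta> \<le> dist (x i) (x (Suc i))" if "i < n" for i
  proof -
    have b: "250*\<delta> \<le> \<tau> (Suc i) - \<tau> i \<and> \<tau> (Suc i) - \<tau> i \<le> 500*\<delta>" using st[of i] that by simp
    have le: "\<tau> i \<le> \<tau> (Suc i)" "\<tau> (Suc i) - \<tau> i \<le> 1000*\<delta>" using b d by linarith+
    have "\<tau> (Suc i) - \<tau> i \<le> dist (x i) (x (Suc i)) + \<delta>"
      using Q le unfolding locq_def x_def by blast
    then show ?thesis using b by linarith
  qed
  have "gromov (x 0) (x n) (x k) \<le> \<delta>/2 + 2*\<delta>"
    by (rule chain_mid[OF H _ _ loc stx k]) (use d in auto)
  then show ?thesis unfolding x_def by simp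
qed

lemma split_len:
  fixes len \<delta> :: real
  assumes "0 < \<delta>" "250*\<delta> \<le> len"
  shows "\<exists>k::nat. (1::nat) \<le> k \<and> 250*\<delta> \<le> len / real k \<and> len / real k \<le> 500*\<delta>"
proof -
  define k where "k = nat (ceiling (len / (500*\<delta>)))"
  have pos: "0 < len / (500*\<delta>)" using assms by simp
  have k1: "1 \<le> k" unfolding k_def using pos by linarith
  have kge: "len / (500*\<delta>) \<le> real k" unfolding k_def using pos by linarith
  have klt: "real k < len / (500*\<delta>) + 1" unfolding k_def using pos by linarith
  have kp: "0 < real k" using k1 by simp
  have up: "len / k \<le> 500*\<delta>" using kge kp assms(1) by (simp add: field_simps)
  have lo: "250*\<delta> \<le> len / k"
  proof (cases "k = 1")
    case True then show ?thesis using assms by simp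
  next
    case False
    then have "2 \<le> real k" using k1 by simp
    moreover have "500*\<delta>*(real k - 1) < len" using klt assms(1) by (simp add: field_simps)
    moreover have "0 \<le> 250*\<delta>*(real k - 2)" using \<open>2 \<le> real k\<close> assms(1) by simp
    moreover have "500*\<delta>*(real k - 1) = 250*\<delta>*real k + 250*\<delta>*(real k - 2)" by (simp add: algebra_simps)
    ultimately have "250*\<delta>*real k \<le> len" by linarith
    then show ?thesis using kp by (simp add: field_simps)
  qed
  show ?thesis using k1 up lo by (intro exI[of _ k]) simp
qed

lemma L1:
  fixes \<gamma> :: "real \<Rightarrow> 'a::metric_space"
  assumes H: "gromov_hyperbolic (UNIV::'a set) \<delta>" and d: "0 < \<delta>"
    and L: "lipc \<gamma>" and Q: "locq \<delta> \<gamma>"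
    and g: "250*\<delta> \<le> t - s" "250*\<delta> \<le> u - t"
  shows "gromov (\<gamma> s) (\<gamma> u) (\<gamma> t) \<le> 5/2*\<delta>"
proof -
  obtain k :: nat where k: "1 \<le> k" "250*\<delta> \<le> (t-s)/real k" "(t-s)/real k \<le> 500*\<delta>" using split_len[OF d g(1)] by blast
  obtain m :: nat where m: "1 \<le> m" "250*\<delta> \<le> (u-t)/real m" "(u-t)/real m \<le> 500*\<delta>" using split_len[OF d g(2)] by blast
  define h1 where "h1 = (t-s)/k"
  define h2 where "h2 = (u-t)/m"
  define \<tau> where "\<tau> i = (if i \<le> k then s + real i * h1 else t + (real i - real k) * h2)" for i
  have kh: "s + real k * h1 = t" unfolding h1_def using k(1) by simp
  have mh: "t + real m * h2 = u" unfolding h2_def using m(1) by simp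
  have st: "250*\<delta> \<le> \<tau> (Suc i) - \<tau> i \<and> \<tau> (Suc i) - \<tau> i \<le> 500*\<delta>" if "i < k + m" for i
  proof (cases "i < k")
    case True
    have tS: "\<tau> (Suc i) = s + (real i + 1)*h1" unfolding \<tau>_def using True by simp
    have ti: "\<tau> i = s + real i * h1" unfolding \<tau>_def using True by simp
    have "\<tau> (Suc i) - \<tau> i = h1" unfolding tS ti by (simp add: algebra_simps)
    then show ?thesis using k h1_def by simp
  next
    case False
    have A: "\<not> Suc i \<le> k" using False that by simp
    have tS: "\<tau> (Suc i) = t + (real i + 1 - real k)*h2" unfolding \<tau>_def using A by simp
    have ti: "\<tau> i = t + (real i - real k)*h2"
    proof (cases "i = k")
      case True then show ?thesis unfolding \<tau>_def using kh by simp
    next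
      case False then show ?thesis unfolding \<tau>_def using \<open>\<not> i < k\<close> by simp
    qed
    have "\<tau> (Suc i) - \<tau> i = h2" unfolding tS ti by (simp add: algebra_simps)
    then show ?thesis using m h2_def by simp
  qed
  have t0: "\<tau> 0 = s" unfolding \<tau>_def by simp
  have tk: "\<tau> k = t" unfolding \<tau>_def using kh by simp
  have nk: "\<not> k+m \<le> k" using m(1) by simp
  have tn: "\<tau> (k+m) = u" unfolding \<tau>_def using mh nk by simp
  have "gromov (\<gamma> (\<tau> 0)) (\<gamma> (\<tau> (k+m))) (\<gamma> (\<tau> k)) \<le> 5/2*\<delta>"
    by (rule curve_chain[where \<tau>=\<tau> and n="k+m" and k=k, OF H d L Q st]) (use k m in auto)
  then show ?thesis using t0 tk tn by simp
qed

lemma L1sym: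
  fixes \<gamma> :: "real \<Rightarrow> 'a::metric_space"
  assumes H: "gromov_hyperbolic (UNIV::'a set) \<delta>" and d: "0 < \<delta>"
    and L: "lipc \<gamma>" and Q: "locq \<delta> \<gamma>"
    and b: "min a b \<le> t" "t \<le> max a b"
    and g: "250*\<delta> \<le> \<bar>t - a\<bar>" "250*\<delta> \<le> \<bar>b - t\<bar>"
  shows "gromov (\<gamma> a) (\<gamma> b) (\<gamma> t) \<le> 5/2*\<delta>"
proof (cases "a \<le> b")
  case True
  then have "250*\<delta> \<le> t - a" "250*\<delta> \<le> b - t" using b g d True by (auto simp: min_def max_def abs_real_def split: if_splits)
  then show ?thesis using L1[OF H d L Q] by blast
next
  case False
  then have "250*\<delta> \<le> t - b" "250*\<delta> \<le> a - t" using b g d False by (auto simp: min_def max_def abs_real_def split: if_splits)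
  then show ?thesis using L1[OF H d L Q] gromov_comm by metis
qed

lemma lipc_cont: "lipc \<gamma> \<Longrightarrow> continuous_on S \<gamma>"
  by (rule lipschitz_on_continuous_on[where L=1], rule lipschitz_onI)
     (auto simp: lipc_def dist_real_def)

lemma curve_ivt:
  fixes \<gamma> :: "real \<Rightarrow> 'a::metric_space"
  assumes L: "lipc \<gamma>" and r: "0 \<le> r" "r \<le> dist (\<gamma> a) (\<gamma> b)"
  shows "\<exists>t. min a b \<le> t \<and> t \<le> max a b \<and> dist (\<gamma> a) (\<gamma> t) = r"
proof -
  define f where "f t = dist (\<gamma> a) (\<gamma> t)" for t
  have c: "continuous_on S f" for S unfolding f_def
    by (intro continuous_on_dist continuous_on_const lipc_cont[OF L])
  show ?thesis
  proof (cases "a \<le> b")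
    case True
    obtain t where "a \<le> t" "t \<le> b" "f t = r" using IVT'[of f a r b, OF _ _ True c] r unfolding f_def by auto
    then show ?thesis using True unfolding f_def by auto
  next
    case False
    have "f a \<le> r" "r \<le> f b" "b \<le> a" using r False unfolding f_def by auto
    then obtain t where "b \<le> t" "t \<le> a" "f t = r" using IVT2'[of f a r b, OF _ _ _ c] by auto
    then show ?thesis using False unfolding f_def by auto
  qed
qed

lemma PNC:
  fixes \<gamma> :: "real \<Rightarrow> 'a::metric_space"
  assumes H: "gromov_hyperbolic (UNIV::'a set) \<delta>" and d: "0 < \<delta>"
    and L: "lipc \<gamma>" and Q: "locq \<delta> \<gamma>"
    and c: "gromov (\<gamma> a) (\<gamma> b) z \<le> c"
    and da: "c + 250*\<delta> \<le> dist (\<gamma> a) z" and db: "c + 250*\<delta> \<le> dist (\<gamma> b) z"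
  shows "\<exists>t. dist z (\<gamma> t) \<le> c + 7*\<delta>"
proof -
  define x where "x = \<gamma> a"
  define y where "y = \<gamma> b"
  define r where "r = gromov z y x"
  have i1: "r + gromov x y z = dist x z" unfolding r_def gromov_def by (simp add: dist_commute field_simps)
  have i2: "r + gromov z x y = dist x y" unfolding r_def gromov_def by (simp add: dist_commute field_simps)
  have i3: "gromov z x y + gromov x y z = dist y z" unfolding gromov_def by (simp add: dist_commute field_simps)
  have r0: "250*\<delta> \<le> r" using i1 c da unfolding x_def y_def by (simp add: dist_commute)
  have g0: "0 \<le> gromov z x y" using dist_triangle[of z x y]
    unfolding gromov_def by (simp add: dist_commute)
  obtain t where t: "min a b \<le> t" "t \<le> max a b" "dist x (\<gamma> t) = r"
    using curve_ivt[OF L, of r a b] r0 d i2 g0 unfolding x_def y_def by auto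
  define w where "w = \<gamma> t"
  have ta: "r \<le> \<bar>t - a\<bar>" using L t(3) unfolding lipc_def x_def
    by (metis abs_minus_commute)
  have "dist x y \<le> dist x w + dist w y" by (rule dist_triangle)
  then have "gromov z x y \<le> dist w y" using i2 t(3) unfolding w_def by simp
  moreover have "250*\<delta> \<le> gromov z x y" using i3 c db unfolding x_def y_def by (simp add: dist_commute)
  moreover have "dist w y \<le> \<bar>b - t\<bar>" using L unfolding lipc_def w_def y_def
    by (metis abs_minus_commute)
  ultimately have tb: "250*\<delta> \<le> \<bar>b - t\<bar>" by linarith
  have gw: "gromov x y w \<le> 5/2*\<delta>" unfolding x_def y_def w_def
    by (rule L1sym[OF H d L Q t(1) t(2)]) (use ta r0 tb in auto)
  have h: "min (gromov z y x) (gromov y w x) - \<delta> \<le> gromov z w x" by (rule hypD[OF H])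
  have i4: "gromov y w x + gromov x y w = dist x w" unfolding gromov_def by (simp add: dist_commute field_simps)
  have dw: "dist z w = dist x z + dist x w - 2 * gromov z w x" unfolding gromov_def by (simp add: dist_commute field_simps)
  have "dist z w \<le> c + 7*\<delta>"
  proof -
    have xw: "dist x w = r" using t(3) unfolding w_def .
    have "gromov z y x - \<delta> \<le> gromov z w x \<or> gromov y w x - \<delta> \<le> gromov z w x"
      by (rule min_le_disj[OF h])
    then have "r - 7/2*\<delta> \<le> gromov z w x" using i4 gw xw d unfolding r_def[symmetric] by linarith
    then show ?thesis using dw xw i1 c[folded x_def y_def] by linarith
  qed
  then show ?thesis unfolding w_def by blast
qed

lemma qg_lipc:
  assumes "local_qgeod L k l \<gamma>"
  shows "lipc \<gamma>"
proof -
  have A: "arclength_param \<gamma>" using assms unfolding local_qgeod_def by blast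
  have le: "dist (\<gamma> s) (\<gamma> s') \<le> s' - s" if "s \<le> s'" for s s'
  proof -
    have "dist (\<gamma> s) (\<gamma> s') \<in> partition_sums \<gamma> s s'"
      unfolding partition_sums_def
    proof (intro CollectI exI conjI)
      show "dist (\<gamma> s) (\<gamma> s') = (\<Sum>i<Suc 0. dist (\<gamma> ((\<lambda>i::nat. if i = 0 then s else s') i))
               (\<gamma> ((\<lambda>i::nat. if i = 0 then s else s') (Suc i))))" by simp
    qed (use that in auto)
    then show ?thesis using A that unfolding arclength_param_def by blast
  qed
  show ?thesis unfolding lipc_def
  proof (intro allI)
    fix s s' :: real
    show "dist (\<gamma> s) (\<gamma> s') \<le> \<bar>s - s'\<bar>"
    proof (cases "s \<le> s'")
      case True then show ?thesis using le[OF True] by simp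
    next
      case False then have "s' \<le> s" by simp
      then show ?thesis using le[of s' s] by (simp add: dist_commute)
    qed
  qed
qed

lemma qg_locq:
  assumes "local_qgeod (1000*\<delta>) 1 \<delta> \<gamma>"
  shows "locq \<delta> \<gamma>"
  using assms unfolding local_qgeod_def locq_def by simp

lemma bdry_rel:
  assumes H: "gromov_hyperbolic (UNIV::'a::metric_space set) \<delta>"
    and z: "\<zeta> \<in> gromov_boundary" and y: "y \<in> \<zeta>" "y' \<in> \<zeta>"
  shows "\<exists>N. \<forall>n\<ge>N. \<forall>m\<ge>N. M \<le> gromov (y n) (y' m) (b::'a)"
proof -
  obtain x where x: "conv_infty x" "\<zeta> = {y. conv_infty y \<and> seq_rel x y}"
    using z unfolding gromov_boundary_def by blast
  have r: "seq_rel x y" "seq_rel x y'" using x y by auto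
  obtain N1 where N1: "\<forall>n\<ge>N1. \<forall>m\<ge>N1. M + \<delta> \<le> gromov (x n) (y m) b"
    using r(1) unfolding seq_rel_def by blast
  obtain N2 where N2: "\<forall>n\<ge>N2. \<forall>m\<ge>N2. M + \<delta> \<le> gromov (x n) (y' m) b"
    using r(2) unfolding seq_rel_def by blast
  show ?thesis
  proof (intro exI allI impI)
    fix n m assume nm: "max N1 N2 \<le> n" "max N1 N2 \<le> m"
    define N where "N = max N1 N2"
    have a: "M + \<delta> \<le> gromov (x N) (y n) b" using N1 nm unfolding N_def by auto
    have c: "M + \<delta> \<le> gromov (x N) (y' m) b" using N2 nm unfolding N_def by auto
    have h: "min (gromov (y n) (x N) b) (gromov (x N) (y' m) b) - \<delta> \<le> gromov (y n) (y' m) b"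
      by (rule hypD[OF H])
    have "gromov (y n) (x N) b = gromov (x N) (y n) b" by (rule gromov_comm)
    then show "M \<le> gromov (y n) (y' m) b" using h a c by (simp add: min_def split: if_splits)
  qed
qed

lemma bdry_far:
  assumes z: "\<zeta> \<in> gromov_boundary" and y: "y \<in> \<zeta>"
  shows "\<exists>N. \<forall>n\<ge>N. M \<le> dist (y n) (b::'a::metric_space)"
proof -
  have "conv_infty y" using z y unfolding gromov_boundary_def by blast
  then obtain N where "\<forall>n\<ge>N. \<forall>m\<ge>N. M \<le> gromov (y n) (y m) b" unfolding conv_infty_def by blast
  then show ?thesis by (metis gromov_selfd order_refl)
qed

lemma tends_top_seq: "tends_bdry_top \<gamma> \<eta> \<Longrightarrow> (\<lambda>n. \<gamma> (real n)) \<in> \<eta>"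
  unfolding tends_bdry_top_def using filterlim_real_sequentially by blast

lemma tends_bot_seq: "tends_bdry_bot \<gamma> \<xi> \<Longrightarrow> (\<lambda>n. \<gamma> (- real n)) \<in> \<xi>"
proof -
  have "filterlim (\<lambda>n::nat. - real n) at_bot sequentially"
    unfolding filterlim_uminus_at_bot by (simp add: filterlim_real_sequentially)
  then show "tends_bdry_bot \<gamma> \<xi> \<Longrightarrow> (\<lambda>n. \<gamma> (- real n)) \<in> \<xi>"
    unfolding tends_bdry_bot_def by blast
qed

lemma bnd_core:
  fixes \<gamma> \<gamma>' :: "real \<Rightarrow> 'a::metric_space"
  assumes H: "gromov_hyperbolic (UNIV::'a set) \<delta>" and d: "0 < \<delta>"
    and L: "lipc \<gamma>" and Q: "locq \<delta> \<gamma>" and L': "lipc \<gamma>'" and Q': "locq \<delta> \<gamma>'"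
    and za: "\<zeta>a \<in> gromov_boundary" and zb: "\<zeta>b \<in> gromov_boundary"
    and s1: "(\<lambda>n. \<gamma>' (real n)) \<in> \<zeta>a" and s2: "(\<lambda>n. \<gamma> (p n)) \<in> \<zeta>a"
    and s3: "(\<lambda>n. \<gamma>' (- real n)) \<in> \<zeta>b" and s4: "(\<lambda>n. \<gamma> (q n)) \<in> \<zeta>b"
  shows "\<exists>t. dist (\<gamma>' t') (\<gamma> t) \<le> 23/2*\<delta>"
proof -
  define z where "z = \<gamma>' t'"
  obtain N1 where N1: "\<forall>n\<ge>N1. \<forall>m\<ge>N1. 100*\<delta> \<le> gromov (\<gamma>' (real n)) (\<gamma> (p m)) z"
    using bdry_rel[OF H za s1 s2] by blast
  obtain N2 where N2: "\<forall>n\<ge>N2. \<forall>m\<ge>N2. 100*\<delta> \<le> gromov (\<gamma>' (- real n)) (\<gamma> (q m)) z"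
    using bdry_rel[OF H zb s3 s4] by blast
  obtain N3 where N3: "\<forall>n\<ge>N3. 255*\<delta> \<le> dist (\<gamma> (p n)) z"
    using bdry_far[OF za s2] by blast
  obtain N4 where N4: "\<forall>n\<ge>N4. 255*\<delta> \<le> dist (\<gamma> (q n)) z"
    using bdry_far[OF zb s4] by blast
  obtain N5 :: nat where N5: "\<bar>t'\<bar> + 250*\<delta> \<le> real N5" using real_arch_simple by blast
  define n where "n = max (max N1 N2) (max (max N3 N4) N5)"
  have n: "N1 \<le> n" "N2 \<le> n" "N3 \<le> n" "N4 \<le> n" "N5 \<le> n" unfolding n_def by auto
  have "real N5 \<le> real n" using n(5) by simp
  then have rn: "\<bar>t'\<bar> + 250*\<delta> \<le> real n" using N5 by linarith
  have g': "gromov (\<gamma>' (- real n)) (\<gamma>' (real n)) (\<gamma>' t') \<le> 5/2*\<delta>"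
    by (rule L1sym[OF H d L' Q']) (use rn d in arith)+
  have a1: "100*\<delta> \<le> gromov (\<gamma>' (real n)) (\<gamma> (p n)) z" using N1 n by blast
  have a2: "100*\<delta> \<le> gromov (\<gamma>' (- real n)) (\<gamma> (q n)) z" using N2 n by blast
  have a3: "255*\<delta> \<le> dist (\<gamma> (p n)) z" using N3 n by blast
  have a4: "255*\<delta> \<le> dist (\<gamma> (q n)) z" using N4 n by blast
  have h1: "min (gromov (\<gamma>' (- real n)) (\<gamma> (q n)) z) (gromov (\<gamma> (q n)) (\<gamma>' (real n)) z) - \<delta>
      \<le> gromov (\<gamma>' (- real n)) (\<gamma>' (real n)) z" by (rule hypD[OF H])
  have h2: "min (gromov (\<gamma> (q n)) (\<gamma> (p n)) z) (gromov (\<gamma> (p n)) (\<gamma>' (real n)) z) - \<delta>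
      \<le> gromov (\<gamma> (q n)) (\<gamma>' (real n)) z" by (rule hypD[OF H])
  have c1: "gromov (\<gamma> (p n)) (\<gamma>' (real n)) z = gromov (\<gamma>' (real n)) (\<gamma> (p n)) z" by (rule gromov_comm)
  have g'': "gromov (\<gamma>' (- real n)) (\<gamma>' (real n)) z \<le> 5/2*\<delta>" using g' unfolding z_def .
  have e1: "gromov (\<gamma> (q n)) (\<gamma>' (real n)) z - \<delta> \<le> 5/2*\<delta>"
    using min_le_disj[OF h1] g'' a2 d by linarith
  have X: "gromov (\<gamma> (q n)) (\<gamma> (p n)) z \<le> 9/2*\<delta>"
    using min_le_disj[OF h2] e1 a1 c1 d by linarith
  have b3: "9/2*\<delta> + 250*\<delta> \<le> dist (\<gamma> (q n)) z" "9/2*\<delta> + 250*\<delta> \<le> dist (\<gamma> (p n)) z"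
    using a3 a4 d by linarith+
  obtain t where "dist z (\<gamma> t) \<le> 9/2*\<delta> + 7*\<delta>"
    using PNC[OF H d L Q X b3] by blast
  then show ?thesis unfolding z_def by (intro exI[of _ t]) simp
qed

lemma limit_set_bdry: "limit_set act H \<subseteq> gromov_boundary"
  unfolding limit_set_def by blast

lemma bnd:
  fixes \<gamma> \<gamma>' :: "real \<Rightarrow> 'a::metric_space"
  assumes H: "gromov_hyperbolic (UNIV::'a set) \<delta>" and d: "0 < \<delta>"
    and L: "lipc \<gamma>" and Q: "locq \<delta> \<gamma>" and L': "lipc \<gamma>'" and Q': "locq \<delta> \<gamma>'"
    and l1: "limit_set act K = {\<xi>, \<eta>}" "\<xi> \<noteq> \<eta>" "tends_bdry_bot \<gamma> \<xi>" "tends_bdry_top \<gamma> \<eta>"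
    and l2: "limit_set act K = {\<xi>', \<eta>'}" "\<xi>' \<noteq> \<eta>'" "tends_bdry_bot \<gamma>' \<xi>'" "tends_bdry_top \<gamma>' \<eta>'"
  shows "\<exists>t. dist (\<gamma>' t') (\<gamma> t) \<le> 23/2*\<delta>"
proof -
  have B: "\<xi> \<in> gromov_boundary" "\<eta> \<in> gromov_boundary"
    using limit_set_bdry[of act K] l1(1) by auto
  have sp: "(\<lambda>n. \<gamma> (real n)) \<in> \<eta>" by (rule tends_top_seq[OF l1(4)])
  have sm: "(\<lambda>n. \<gamma> (- real n)) \<in> \<xi>" by (rule tends_bot_seq[OF l1(3)])
  have tp: "(\<lambda>n. \<gamma>' (real n)) \<in> \<eta>'" by (rule tends_top_seq[OF l2(4)])
  have tm: "(\<lambda>n. \<gamma>' (- real n)) \<in> \<xi>'" by (rule tends_bot_seq[OF l2(3)])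
  have eq: "{\<xi>', \<eta>'} = {\<xi>, \<eta>}" using l1(1) l2(1) by simp
  show ?thesis
  proof (cases "\<eta>' = \<eta>")
    case True
    then have "\<xi>' = \<xi>" using eq l2(2) by (auto simp: doubleton_eq_iff)
    then show ?thesis using bnd_core[OF H d L Q L' Q' B(2) B(1), of "\<lambda>n. real n" "\<lambda>n. - real n" t'] tp sp tm sm True
      by simp
  next
    case False
    then have "\<eta>' = \<xi>" "\<xi>' = \<eta>" using eq l2(2) by (auto simp: doubleton_eq_iff)
    then show ?thesis using bnd_core[OF H d L Q L' Q' B(1) B(2), of "\<lambda>n. - real n" "\<lambda>n. real n" t'] tp sp tm sm
      by simp
  qed
qed

lemma FW:
  fixes \<gamma>1 \<gamma>2 :: "real \<Rightarrow> 'a::metric_space"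
  assumes H: "gromov_hyperbolic (UNIV::'a set) \<delta>" and d: "0 < \<delta>"
    and L1: "lipc \<gamma>1" and Q1: "locq \<delta> \<gamma>1" and L2: "lipc \<gamma>2" and Q2: "locq \<delta> \<gamma>2"
    and dA: "dist (\<gamma>1 a) (\<gamma>2 c) \<le> L0 - 337*\<delta>" and dB: "dist (\<gamma>1 b) (\<gamma>2 e) \<le> L0 - 337*\<delta>"
    and dAB: "2*L0 \<le> dist (\<gamma>1 a) (\<gamma>1 b)" and L0: "400*\<delta> \<le> L0"
  shows "\<exists>t1 t. dist (\<gamma>1 a) (\<gamma>1 t1) = L0 - 50*\<delta> \<and> dist (\<gamma>1 t1) (\<gamma>2 t) \<le> 23/2*\<delta>"
proof -
  obtain t1 where t1: "min a b \<le> t1" "t1 \<le> max a b" "dist (\<gamma>1 a) (\<gamma>1 t1) = L0 - 50*\<delta>"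
    using curve_ivt[OF L1, of "L0 - 50*\<delta>" a b] dAB L0 d by auto
  define W where "W = \<gamma>1 t1"
  define A1 where "A1 = \<gamma>1 a"
  define B1 where "B1 = \<gamma>1 b"
  define A2 where "A2 = \<gamma>2 c"
  define B2 where "B2 = \<gamma>2 e"
  have AW: "dist A1 W = L0 - 50*\<delta>" using t1(3) unfolding A1_def W_def .
  have tr1: "dist A1 B1 \<le> dist A1 W + dist W B1" by (rule dist_triangle)
  have WB: "L0 + 50*\<delta> \<le> dist W B1" using tr1 AW dAB unfolding A1_def B1_def by linarith
  have ta: "dist A1 W \<le> \<bar>t1 - a\<bar>" using L1 unfolding lipc_def A1_def W_def by (metis abs_minus_commute)
  have tb: "dist W B1 \<le> \<bar>b - t1\<bar>" using L1 unfolding lipc_def B1_def W_def by (metis abs_minus_commute)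
  have g: "gromov A1 B1 W \<le> 5/2*\<delta>" unfolding A1_def B1_def W_def
    by (rule L1sym[OF H d L1 Q1 t1(1) t1(2)]) (use ta tb AW WB L0 d in \<open>simp_all add: A1_def B1_def W_def\<close>)
  have h1: "min (gromov A1 A2 W) (gromov A2 B1 W) - \<delta> \<le> gromov A1 B1 W" by (rule hypD[OF H])
  have h2: "min (gromov A2 B2 W) (gromov B2 B1 W) - \<delta> \<le> gromov A2 B1 W" by (rule hypD[OF H])
  have gA: "dist A1 W - dist A1 A2 \<le> gromov A1 A2 W" by (rule gromov_lower)
  have gB: "dist B1 W - dist B1 B2 \<le> gromov B1 B2 W" by (rule gromov_lower)
  have cB: "gromov B2 B1 W = gromov B1 B2 W" by (rule gromov_comm)
  have dA': "dist A1 A2 \<le> L0 - 337*\<delta>" using dA unfolding A1_def A2_def .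
  have dB': "dist B1 B2 \<le> L0 - 337*\<delta>" using dB unfolding B1_def B2_def .
  have WB': "L0 + 50*\<delta> \<le> dist B1 W" using WB by (simp add: dist_commute)
  have e1: "min (gromov A2 B2 W) (gromov B2 B1 W) - 2*\<delta> \<le> 5/2*\<delta>"
    using min_le_disj[OF h1] g gA AW dA' d h2 by linarith
  have X: "gromov A2 B2 W \<le> 9/2*\<delta>"
    using min_le_disj[of "gromov A2 B2 W" "gromov B2 B1 W" "2*\<delta>" "5/2*\<delta>"] e1 gB cB WB' dB' d by linarith
  have tA: "dist A1 W \<le> dist A1 A2 + dist A2 W" by (rule dist_triangle)
  have tB: "dist B1 W \<le> dist B1 B2 + dist B2 W" by (rule dist_triangle)
  have b3: "9/2*\<delta> + 250*\<delta> \<le> dist (\<gamma>2 c) W" "9/2*\<delta> + 250*\<delta> \<le> dist (\<gamma>2 e) W"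
    using tA tB AW WB' dA' dB' d unfolding A2_def[symmetric] B2_def[symmetric] by (simp_all add: dist_commute)
  obtain t where "dist W (\<gamma>2 t) \<le> 9/2*\<delta> + 7*\<delta>"
    using PNC[OF H d L2 Q2 X[unfolded A2_def B2_def] b3] by blast
  then show ?thesis using t1(3) unfolding W_def by (intro exI[of _ t1] exI[of _ t]) simp
qed

lemma Lbound:
  assumes act: "isometric_action G act" and red: "alpha_reduced G act \<delta> \<alpha> U p"
    and u0: "\<exists>u0\<in>U. (\<forall>u\<in>U. dist (act u p) p \<le> dist (act u0 p) p) \<and>
                 0 < dist (act u0 p) p \<and> dist (act u0 p) p \<le> L0"
    and u: "u \<in> U \<union> m_inv G ` U"
  shows "dist (act u p) p \<le> L0"
proof -
  have grp: "group G" using act unfolding isometric_action_def by blast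
  have UC: "U \<subseteq> carrier G" using red unfolding alpha_reduced_def by blast
  have bU: "dist (act v p) p \<le> L0" if "v \<in> U" for v using u0 that by force
  from u show ?thesis
  proof
    assume "u \<in> U" then show ?thesis by (rule bU)
  next
    assume "u \<in> m_inv G ` U"
    then obtain v where v: "v \<in> U" "u = inv\<^bsub>G\<^esub> v" by auto
    have vc: "v \<in> carrier G" using v UC by auto
    have ic: "inv\<^bsub>G\<^esub> v \<in> carrier G" using group.inv_closed[OF grp vc] .
    have "act v (act (inv\<^bsub>G\<^esub> v) p) = act (v \<otimes>\<^bsub>G\<^esub> inv\<^bsub>G\<^esub> v) p"
      using act vc ic unfolding isometric_action_def by auto
    also have "\<dots> = p" using group.r_inv[OF grp vc] act unfolding isometric_action_def by auto
    finally have e: "act v (act (inv\<^bsub>G\<^esub> v) p) = p" .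
    have "dist (act v (act (inv\<^bsub>G\<^esub> v) p)) (act v p) = dist (act (inv\<^bsub>G\<^esub> v) p) p"
      using act vc unfolding isometric_action_def by auto
    then show ?thesis using e bU[OF v(1)] v(2) by (simp add: dist_commute)
  qed
qed

lemma in_nbhd: "0 \<le> r \<Longrightarrow> x \<in> Y \<Longrightarrow> x \<in> nbhd r Y"
  unfolding nbhd_def by force

lemma MF_Y:
  assumes "loxodromic_moving_family G act \<delta> \<Delta>0 Q" "(H, Y) \<in> Q"
  shows "Y = C_H act \<delta> H"
proof -
  have M1: "\<forall>(H, Y)\<in>Q. loxodromic_subgroup G act H \<and> Y = C_H act \<delta> H"
    using assms(1) unfolding loxodromic_moving_family_def by (rule conjunct1)
  show ?thesis using bspec[OF M1 assms(2)] by simp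
qed

lemma MF_sep:
  assumes "loxodromic_moving_family G act \<delta> \<Delta>0 Q" "(H1, Y1) \<in> Q" "(H2, Y2) \<in> Q"
    "(H1, Y1) \<noteq> (H2, Y2)" "x \<in> nbhd (20 * \<delta>) Y1 \<inter> nbhd (20 * \<delta>) Y2" "y \<in> nbhd (20 * \<delta>) Y1 \<inter> nbhd (20 * \<delta>) Y2"
  shows "dist x y \<le> \<Delta>0"
proof -
  have M3: "\<forall>(H1, Y1)\<in>Q. \<forall>(H2, Y2)\<in>Q. (H1, Y1) \<noteq> (H2, Y2) \<longrightarrow>
        (\<forall>x\<in>nbhd (20 * \<delta>) Y1 \<inter> nbhd (20 * \<delta>) Y2.
           \<forall>y\<in>nbhd (20 * \<delta>) Y1 \<inter> nbhd (20 * \<delta>) Y2. dist x y \<le> \<Delta>0)"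
    using assms(1) unfolding loxodromic_moving_family_def by (rule conjunct2[THEN conjunct2])
  have A: "\<forall>(H2', Y2')\<in>Q. (H1, Y1) \<noteq> (H2', Y2') \<longrightarrow>
        (\<forall>x\<in>nbhd (20 * \<delta>) Y1 \<inter> nbhd (20 * \<delta>) Y2'.
           \<forall>y\<in>nbhd (20 * \<delta>) Y1 \<inter> nbhd (20 * \<delta>) Y2'. dist x y \<le> \<Delta>0)"
    using bspec[OF M3 assms(2)] by simp
  have "(H1, Y1) \<noteq> (H2, Y2) \<longrightarrow>
        (\<forall>x\<in>nbhd (20 * \<delta>) Y1 \<inter> nbhd (20 * \<delta>) Y2.
           \<forall>y\<in>nbhd (20 * \<delta>) Y1 \<inter> nbhd (20 * \<delta>) Y2. dist x y \<le> \<Delta>0)"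
    using bspec[OF A assms(3)] by simp
  then show ?thesis using assms(4-6) by blast
qed

lemma C_H_intro:
  assumes "limit_set act H = {\<xi>, \<eta>}" "\<xi> \<noteq> \<eta>" "local_qgeod (1000 * \<delta>) 1 \<delta> \<gamma>"
    "tends_bdry_bot \<gamma> \<xi>" "tends_bdry_top \<gamma> \<eta>" "dist x (\<gamma> t) < 20 * \<delta>"
  shows "x \<in> C_H act \<delta> H"
  unfolding C_H_def using assms by blast

theorem mainTheorem16:
  fixes G :: "('g, 'b) monoid_scheme"
    and act :: "'g \<Rightarrow> 'a::metric_space \<Rightarrow> 'a"
    and \<delta> L0 \<Delta>0 \<tau> :: real
    and U :: "'g set" and p :: 'a
    and Q :: "('g set \<times> 'a set) set"
    and H1 H2 :: "'g set" and Y1 Y2 :: "'a set"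
    and w :: "'g list"
  assumes "isometric_action G act"
    and "gromov_hyperbolic (UNIV :: 'a set) \<delta>"
    and "geodesic_space (UNIV :: 'a set)"
    and "L0 > 0" and "\<Delta>0 > 0"
    and "alpha_reduced G act \<delta> (200 * \<delta>) U p"
    and "\<exists>u0\<in>U. (\<forall>u\<in>U. dist (act u p) p \<le> dist (act u0 p) p) \<and>
                 0 < dist (act u0 p) p \<and> dist (act u0 p) p \<le> L0"
    and "loxodromic_moving_family G act \<delta> \<Delta>0 Q"
    and "\<tau> \<ge> \<Delta>0 + 2 * L0 + 223 * \<delta>"
    and "(H1, Y1) \<in> Q" and "(H2, Y2) \<in> Q"
    and "reduced_word G U w"
    and "shortening_word G act \<delta> (200 * \<delta>) \<tau> p w Y1"
    and "shortening_word G act \<delta> (200 * \<delta>) \<tau> p w Y2"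
  shows "(H1, Y1) = (H2, Y2)"
proof (rule ccontr)
  assume neq: "(H1, Y1) \<noteq> (H2, Y2)"
  note act = assms(1) and H = assms(2) and red = assms(6) and u0 = assms(7) and MF = assms(8)
    and tau = assms(9) and inQ1 = assms(10) and inQ2 = assms(11) and rw = assms(12)
    and sw1 = assms(13) and sw2 = assms(14)
  define xn where "xn = act (word_elem G w) p"
  have wne: "w \<noteq> []" using sw1 unfolding shortening_word_def by blast
  obtain y01 yn1 where P1: "is_projection \<delta> p Y1 y01" "is_projection \<delta> xn Y1 yn1"
    "dist y01 yn1 > \<tau>" "dist p y01 \<le> dist (act (hd w) p) p / 2 - 200*\<delta>"
    "dist xn yn1 \<le> dist (act (last w) p) p / 2 - 200*\<delta>"
    using sw1 unfolding shortening_word_def xn_def by blast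
  obtain y02 yn2 where P2: "is_projection \<delta> p Y2 y02" "is_projection \<delta> xn Y2 yn2"
    "dist y02 yn2 > \<tau>" "dist p y02 \<le> dist (act (hd w) p) p / 2 - 200*\<delta>"
    "dist xn yn2 \<le> dist (act (last w) p) p / 2 - 200*\<delta>"
    using sw2 unfolding shortening_word_def xn_def by blast
  have sw: "set w \<subseteq> U \<union> m_inv G ` U" using rw unfolding reduced_word_def by blast
  have hdL: "dist (act (hd w) p) p \<le> L0"
    by (rule Lbound[OF act red u0]) (use sw hd_in_set[OF wne] in blast)
  have lastL: "dist (act (last w) p) p \<le> L0"
    by (rule Lbound[OF act red u0]) (use sw last_in_set[OF wne] in blast)
  have dp1: "dist p y01 \<le> L0/2 - 200*\<delta>" using P1(4) hdL by linarith
  have dp2: "dist p y02 \<le> L0/2 - 200*\<delta>" using P2(4) hdL by linarith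
  have dn1: "dist xn yn1 \<le> L0/2 - 200*\<delta>" using P1(5) lastL by linarith
  have dn2: "dist xn yn2 \<le> L0/2 - 200*\<delta>" using P2(5) lastL by linarith
  have L0d: "400*\<delta> \<le> L0" using dp1 zero_le_dist[of p y01] by linarith
  have Y1: "Y1 = C_H act \<delta> H1" by (rule MF_Y[OF MF inQ1])
  have Y2: "Y2 = C_H act \<delta> H2" by (rule MF_Y[OF MF inQ2])
  have y01: "y01 \<in> C_H act \<delta> H1" using P1(1) Y1 unfolding is_projection_def by blast
  have yn1: "yn1 \<in> C_H act \<delta> H1" using P1(2) Y1 unfolding is_projection_def by blast
  have y02: "y02 \<in> C_H act \<delta> H2" using P2(1) Y2 unfolding is_projection_def by blast
  have yn2: "yn2 \<in> C_H act \<delta> H2" using P2(2) Y2 unfolding is_projection_def by blast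
  obtain \<xi>1 \<eta>1 \<gamma>1 s where G1: "limit_set act H1 = {\<xi>1, \<eta>1}" "\<xi>1 \<noteq> \<eta>1"
      "local_qgeod (1000 * \<delta>) 1 \<delta> \<gamma>1" "tends_bdry_bot \<gamma>1 \<xi>1" "tends_bdry_top \<gamma>1 \<eta>1"
      "dist y01 (\<gamma>1 s) < 20 * \<delta>"
    using y01 unfolding C_H_def by blast
  obtain \<xi>1' \<eta>1' \<gamma>1' s' where G1': "limit_set act H1 = {\<xi>1', \<eta>1'}" "\<xi>1' \<noteq> \<eta>1'"
      "local_qgeod (1000 * \<delta>) 1 \<delta> \<gamma>1'" "tends_bdry_bot \<gamma>1' \<xi>1'" "tends_bdry_top \<gamma>1' \<eta>1'"
      "dist yn1 (\<gamma>1' s') < 20 * \<delta>"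
    using yn1 unfolding C_H_def by blast
  obtain \<xi>2 \<eta>2 \<gamma>2 r where G2: "limit_set act H2 = {\<xi>2, \<eta>2}" "\<xi>2 \<noteq> \<eta>2"
      "local_qgeod (1000 * \<delta>) 1 \<delta> \<gamma>2" "tends_bdry_bot \<gamma>2 \<xi>2" "tends_bdry_top \<gamma>2 \<eta>2"
      "dist y02 (\<gamma>2 r) < 20 * \<delta>"
    using y02 unfolding C_H_def by blast
  obtain \<xi>2' \<eta>2' \<gamma>2' r' where G2': "limit_set act H2 = {\<xi>2', \<eta>2'}" "\<xi>2' \<noteq> \<eta>2'"
      "local_qgeod (1000 * \<delta>) 1 \<delta> \<gamma>2'" "tends_bdry_bot \<gamma>2' \<xi>2'" "tends_bdry_top \<gamma>2' \<eta>2'"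
      "dist yn2 (\<gamma>2' r') < 20 * \<delta>"
    using yn2 unfolding C_H_def by blast
  have d: "0 < \<delta>" using G1(6) zero_le_dist[of y01 "\<gamma>1 s"] by linarith
  have L1: "lipc \<gamma>1" "locq \<delta> \<gamma>1" using G1(3) by (rule qg_lipc, rule qg_locq)
  have L1': "lipc \<gamma>1'" "locq \<delta> \<gamma>1'" using G1'(3) by (rule qg_lipc, rule qg_locq)
  have L2: "lipc \<gamma>2" "locq \<delta> \<gamma>2" using G2(3) by (rule qg_lipc, rule qg_locq)
  have L2': "lipc \<gamma>2'" "locq \<delta> \<gamma>2'" using G2'(3) by (rule qg_lipc, rule qg_locq)
  obtain s'' where S1: "dist (\<gamma>1' s') (\<gamma>1 s'') \<le> 23/2*\<delta>"
    using bnd[OF H d L1 L1' G1(1,2,4,5) G1'(1,2,4,5)] by blast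
  obtain r'' where S2: "dist (\<gamma>2' r') (\<gamma>2 r'') \<le> 23/2*\<delta>"
    using bnd[OF H d L2 L2' G2(1,2,4,5) G2'(1,2,4,5)] by blast
  define A1 where "A1 = \<gamma>1 s"
  define B1 where "B1 = \<gamma>1 s''"
  define A2 where "A2 = \<gamma>2 r"
  define B2 where "B2 = \<gamma>2 r''"
  have dA: "dist A1 A2 \<le> L0 - 337*\<delta>"
  proof -
    have "dist A1 A2 \<le> dist A1 y01 + dist y01 A2" by (rule dist_triangle)
    moreover have "dist y01 A2 \<le> dist y01 p + dist p A2" by (rule dist_triangle)
    moreover have "dist p A2 \<le> dist p y02 + dist y02 A2" by (rule dist_triangle)
    ultimately show ?thesis using G1(6) G2(6) dp1 dp2 d unfolding A1_def A2_def
      by (simp add: dist_commute)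
  qed
  have dB: "dist B1 B2 \<le> L0 - 337*\<delta>"
  proof -
    have "dist B1 B2 \<le> dist B1 (\<gamma>1' s') + dist (\<gamma>1' s') B2" by (rule dist_triangle)
    moreover have "dist (\<gamma>1' s') B2 \<le> dist (\<gamma>1' s') yn1 + dist yn1 B2" by (rule dist_triangle)
    moreover have "dist yn1 B2 \<le> dist yn1 xn + dist xn B2" by (rule dist_triangle)
    moreover have "dist xn B2 \<le> dist xn yn2 + dist yn2 B2" by (rule dist_triangle)
    moreover have "dist yn2 B2 \<le> dist yn2 (\<gamma>2' r') + dist (\<gamma>2' r') B2" by (rule dist_triangle)
    ultimately show ?thesis using S1 S2 G1'(6) G2'(6) dn1 dn2 d unfolding B1_def B2_def
      by (simp add: dist_commute)
  qed
  have dAB: "\<tau> - 103/2*\<delta> < dist A1 B1"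
  proof -
    have "dist y01 yn1 \<le> dist y01 A1 + dist A1 yn1" by (rule dist_triangle)
    moreover have "dist A1 yn1 \<le> dist A1 B1 + dist B1 yn1" by (rule dist_triangle)
    moreover have "dist B1 yn1 \<le> dist B1 (\<gamma>1' s') + dist (\<gamma>1' s') yn1" by (rule dist_triangle)
    ultimately show ?thesis using S1 G1(6) G1'(6) P1(3) unfolding A1_def B1_def
      by (simp add: dist_commute)
  qed
  have big: "2*L0 \<le> dist A1 B1" using dAB tau d assms(5) by linarith
  have dA0: "dist (\<gamma>1 s) (\<gamma>2 r) \<le> L0 - 337*\<delta>" using dA unfolding A1_def A2_def .
  have dB0: "dist (\<gamma>1 s'') (\<gamma>2 r'') \<le> L0 - 337*\<delta>" using dB unfolding B1_def B2_def .
  have big0: "2*L0 \<le> dist (\<gamma>1 s) (\<gamma>1 s'')" using big unfolding A1_def B1_def .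
  have big1: "2*L0 \<le> dist (\<gamma>1 s'') (\<gamma>1 s)" using big0 by (simp add: dist_commute)
  obtain t1 t where W1: "dist A1 (\<gamma>1 t1) = L0 - 50*\<delta>" "dist (\<gamma>1 t1) (\<gamma>2 t) \<le> 23/2*\<delta>"
    using FW[OF H d L1 L2 dA0 dB0 big0 L0d] unfolding A1_def by blast
  obtain t2 t' where W2: "dist B1 (\<gamma>1 t2) = L0 - 50*\<delta>" "dist (\<gamma>1 t2) (\<gamma>2 t') \<le> 23/2*\<delta>"
    using FW[OF H d L1 L2 dB0 dA0 big1 L0d] unfolding B1_def by blast
  have far: "\<Delta>0 < dist (\<gamma>1 t1) (\<gamma>1 t2)"
  proof -
    have "dist A1 B1 \<le> dist A1 (\<gamma>1 t1) + dist (\<gamma>1 t1) B1" by (rule dist_triangle)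
    moreover have "dist (\<gamma>1 t1) B1 \<le> dist (\<gamma>1 t1) (\<gamma>1 t2) + dist (\<gamma>1 t2) B1" by (rule dist_triangle)
    moreover have "dist (\<gamma>1 t2) B1 = dist B1 (\<gamma>1 t2)" by (rule dist_commute)
    ultimately show ?thesis using W1(1) W2(1) dAB tau d by linarith
  qed
  have i1: "\<gamma>1 t1 \<in> C_H act \<delta> H1" by (rule C_H_intro[OF G1(1-5), of _ t1]) (use d in simp)
  have i2: "\<gamma>1 t2 \<in> C_H act \<delta> H1" by (rule C_H_intro[OF G1(1-5), of _ t2]) (use d in simp)
  have i3: "\<gamma>1 t1 \<in> C_H act \<delta> H2" by (rule C_H_intro[OF G2(1-5), of _ t]) (use W1(2) d in linarith)
  have i4: "\<gamma>1 t2 \<in> C_H act \<delta> H2" by (rule C_H_intro[OF G2(1-5), of _ t']) (use W2(2) d in linarith)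
  have inY1: "\<gamma>1 t1 \<in> Y1" "\<gamma>1 t2 \<in> Y1" using i1 i2 Y1 by simp_all
  have inY2: "\<gamma>1 t1 \<in> Y2" "\<gamma>1 t2 \<in> Y2" using i3 i4 Y2 by simp_all
  have d20: "0 \<le> 20*\<delta>" using d by simp
  have "\<gamma>1 t1 \<in> nbhd (20 * \<delta>) Y1 \<inter> nbhd (20 * \<delta>) Y2" "\<gamma>1 t2 \<in> nbhd (20 * \<delta>) Y1 \<inter> nbhd (20 * \<delta>) Y2"
    using in_nbhd[OF d20] inY1 inY2 by blast+
  then have "dist (\<gamma>1 t1) (\<gamma>1 t2) \<le> \<Delta>0" using MF_sep[OF MF inQ1 inQ2 neq] by blast
  then show False using far by linarith
qed

end
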